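(* Let $\ell,r\geq 1$ and let $C_{\ell,r}$ be the double-cycle obtained from a directed cycle of length $\ell$ and a directed cycle of length $r$ by identifying one vertex of each. Then $C_{\ell,r}$ admits a boolean nilpotent function if and only if $\min(\ell,r)$ divides $\max(\ell,r)$, and every boolean nilpotent function admitted by $C_{\ell,r}$ has class $2\max(\ell,r)-1$.
   Context: A directed cycle of length $1$ is a single vertex with a loop. $C_{\ell,r}$ has $\ell+r-1$ vertices. A boolean function on a finite vertex set $V$ is a map $f:\{0,1\}^V\to\{0,1\}^V$; its (unsigned) interaction graph has an arc $(j,i)$ iff $f_i$ depends essentially on $x_j$, i.e. $f_i(a)\neq f_i(b)$ for some $a,b$ differing only in coordinate $j$. A digraph $G$ admits $f$ if the interaction graph of $f$ equals $G$. $f$ is nilpotent if $f^k$ is constant for some $k\geq 0$ ($f^0=\mathrm{id}$); the least such $k$ is its class. *)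

theory Defs
  imports Main
begin

text \<open>Configurations on a vertex set V: maps nat \<Rightarrow> bool that are False outside V
  (i.e. elements of {0,1}^V).\<close>
definition conf :: "nat set \<Rightarrow> (nat \<Rightarrow> bool) set" where
  "conf V = {x. \<forall>i. i \<notin> V \<longrightarrow> \<not> x i}"

definition boolfun :: "nat set \<Rightarrow> ((nat \<Rightarrow> bool) \<Rightarrow> (nat \<Rightarrow> bool)) \<Rightarrow> bool" where
  "boolfun V f \<longleftrightarrow> (\<forall>x \<in> conf V. f x \<in> conf V)"

definition interaction_graph :: "nat set \<Rightarrow> ((nat \<Rightarrow> bool) \<Rightarrow> (nat \<Rightarrow> bool)) \<Rightarrow> (nat \<times> nat) set" where
  "interaction_graph V f = {(j, i). j \<in> V \<and> i \<in> V \<and>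
      (\<exists>a \<in> conf V. f a i \<noteq> f (a(j := \<not> a j)) i)}"

definition admits :: "nat set \<Rightarrow> (nat \<times> nat) set \<Rightarrow> ((nat \<Rightarrow> bool) \<Rightarrow> (nat \<Rightarrow> bool)) \<Rightarrow> bool" where
  "admits V G f \<longleftrightarrow> boolfun V f \<and> interaction_graph V f = G"

definition const_iter :: "nat set \<Rightarrow> ((nat \<Rightarrow> bool) \<Rightarrow> (nat \<Rightarrow> bool)) \<Rightarrow> nat \<Rightarrow> bool" where
  "const_iter V f k \<longleftrightarrow> (\<exists>c. \<forall>x \<in> conf V. (f ^^ k) x = c)"

definition nilpotent :: "nat set \<Rightarrow> ((nat \<Rightarrow> bool) \<Rightarrow> (nat \<Rightarrow> bool)) \<Rightarrow> bool" where
  "nilpotent V f \<longleftrightarrow> (\<exists>k. const_iter V f k)"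

definition nil_class :: "nat set \<Rightarrow> ((nat \<Rightarrow> bool) \<Rightarrow> (nat \<Rightarrow> bool)) \<Rightarrow> nat" where
  "nil_class V f = (LEAST k. const_iter V f k)"

text \<open>Arcs of the directed cycle through the listed vertices, in order
  (a list of length 1 gives a loop).\<close>
definition cycle_arcs :: "nat list \<Rightarrow> (nat \<times> nat) set" where
  "cycle_arcs vs = {(vs ! i, vs ! ((i + 1) mod length vs)) | i. i < length vs}"

text \<open>Double cycle C_{l,r} on vertices {0..<l+r-1}: cycle 0,1,..,l-1 and cycle 0,l,..,l+r-2,
  sharing vertex 0.\<close>
definition double_cycle :: "nat \<Rightarrow> nat \<Rightarrow> (nat \<times> nat) set" where
  "double_cycle l r = cycle_arcs [0..<l] \<union> cycle_arcs (0 # [l..<l + r - 1])"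

end

theory Submission
  imports Defs
begin


definition ext :: "(nat \<Rightarrow> bool) \<Rightarrow> nat \<Rightarrow> (nat \<Rightarrow> bool) \<Rightarrow> nat \<Rightarrow> bool" where
  "ext u l a t = (if l \<le> Suc t then a (Suc t - l) else u t)"

definition Sys :: "nat \<Rightarrow> nat \<Rightarrow> (bool \<Rightarrow> bool \<Rightarrow> bool) \<Rightarrow> (nat \<Rightarrow> bool) \<Rightarrow> bool" where
  "Sys l r g a \<longleftrightarrow> (\<exists>uA uB. \<forall>t. a (Suc t) = g (ext uA l a t) (ext uB r a t))"

definition win :: "nat \<Rightarrow> nat \<Rightarrow> (nat \<Rightarrow> bool) \<Rightarrow> (nat \<Rightarrow> bool) \<Rightarrow> bool" where
  "win L k a b \<longleftrightarrow> (\<forall>j<L. a (k - j) = b (k - j))"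

definition AllWin :: "nat \<Rightarrow> nat \<Rightarrow> (bool \<Rightarrow> bool \<Rightarrow> bool) \<Rightarrow> nat \<Rightarrow> bool" where
  "AllWin l r g k \<longleftrightarrow> (\<forall>a b. Sys l r g a \<longrightarrow> Sys l r g b \<longrightarrow> win (max l r) k a b)"

definition ess :: "(bool \<Rightarrow> bool \<Rightarrow> bool) \<Rightarrow> bool" where
  "ess g \<longleftrightarrow> (\<exists>v. g True v \<noteq> g False v) \<and> (\<exists>u. g u True \<noteq> g u False)"

function gen :: "nat \<Rightarrow> nat \<Rightarrow> (bool \<Rightarrow> bool \<Rightarrow> bool) \<Rightarrow> bool \<Rightarrow> (nat \<Rightarrow> bool) \<Rightarrow> (nat \<Rightarrow> bool) \<Rightarrow> nat \<Rightarrow> bool" where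
  "gen l r g a0 uA uB 0 = a0"
| "gen l r g a0 uA uB (Suc t) = g (if 0 < l \<and> l \<le> Suc t then gen l r g a0 uA uB (Suc t - l) else uA t)
      (if 0 < r \<and> r \<le> Suc t then gen l r g a0 uA uB (Suc t - r) else uB t)"
  by pat_completeness auto
termination by (relation "measure (\<lambda>(l,r,g,a0,uA,uB,t). t)") auto

lemma Sys_gen: "0 < l \<Longrightarrow> 0 < r \<Longrightarrow> Sys l r g (gen l r g a0 uA uB)"
  unfolding Sys_def ext_def by (rule exI[of _ uA], rule exI[of _ uB]) auto

lemma Sys_swap: "Sys l r g a \<longleftrightarrow> Sys r l (\<lambda>u v. g v u) a"
  unfolding Sys_def by blast

lemma AllWin_swap: "AllWin l r g k \<longleftrightarrow> AllWin r l (\<lambda>u v. g v u) k"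
  unfolding AllWin_def using Sys_swap[of l r g] by (simp add: max.commute)

lemma ess_swap: "ess g \<longleftrightarrow> ess (\<lambda>u v. g v u)"
  unfolding ess_def by auto

lemma Sys_const: "g e e = e \<Longrightarrow> Sys l r g (\<lambda>_. e)"
  unfolding Sys_def ext_def by (rule exI[of _ "\<lambda>_. e"], rule exI[of _ "\<lambda>_. e"]) auto

lemma Sys_rec: "Sys l r g a \<Longrightarrow> 0 < t \<Longrightarrow> l \<le> t \<Longrightarrow> r \<le> t \<Longrightarrow> a t = g (a (t - l)) (a (t - r))"
proof -
  assume "Sys l r g a" "0 < t" "l \<le> t" "r \<le> t"
  then obtain uA uB where h: "\<forall>t. a (Suc t) = g (ext uA l a t) (ext uB r a t)"
    unfolding Sys_def by blast
  obtain t' where t: "t = Suc t'" using \<open>0 < t\<close> by (cases t) auto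
  show ?thesis using h[rule_format, of t'] \<open>l \<le> t\<close> \<open>r \<le> t\<close> unfolding t ext_def by simp
qed

lemma Sys_shift: assumes "Sys l r g a" shows "Sys l r g (\<lambda>t. a (Suc t))"
proof -
  obtain uA uB where h: "\<forall>t. a (Suc t) = g (ext uA l a t) (ext uB r a t)"
    using assms unfolding Sys_def by blast
  show ?thesis unfolding Sys_def
    apply (rule exI[of _ "\<lambda>t. ext uA l a (Suc t)"], rule exI[of _ "\<lambda>t. ext uB r a (Suc t)"])
    using h by (auto simp: ext_def Suc_diff_le)
qed

lemma AllWin_fix:
  assumes "AllWin l r g k" "max l r - 1 \<le> k" "0 < l" "0 < r"
  shows "\<exists>e. g e e = e"
proof -
  let ?L = "max l r"
  define a where "a = gen l r g True (\<lambda>_. True) (\<lambda>_. True)"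
  have sa: "Sys l r g a" using Sys_gen assms a_def by blast
  have sb: "Sys l r g (\<lambda>t. a (Suc t))" by (rule Sys_shift[OF sa])
  have w: "\<forall>j<?L. a (k - j) = a (Suc (k - j))"
    using assms(1) sa sb unfolding AllWin_def win_def by blast
  have eq: "\<forall>i. i \<le> ?L \<longrightarrow> a (Suc k - i) = a (Suc k)"
  proof (intro allI impI)
    fix i assume "i \<le> ?L" thus "a (Suc k - i) = a (Suc k)"
    proof (induction i)
      case 0 then show ?case by simp
    next
      case (Suc i)
      then have "i < ?L" by simp
      with w have "a (k - i) = a (Suc (k - i))" by blast
      moreover have "i \<le> k" using \<open>i < ?L\<close> assms(2) by linarith
      hence "Suc (k - i) = Suc k - i" by (simp add: Suc_diff_le)
      moreover
      moreover have "k - i = Suc k - Suc i" by simp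
      ultimately show ?case using Suc.IH Suc.prems by (metis Suc_leD)
    qed
  qed
  have "a (Suc k) = g (a (Suc k - l)) (a (Suc k - r))"
    by (rule Sys_rec[OF sa]) (use assms in auto)
  moreover have "a (Suc k - l) = a (Suc k)" using eq[rule_format, of l] by simp
  moreover have "a (Suc k - r) = a (Suc k)" using eq[rule_format, of r] by simp
  ultimately have "g (a (Suc k)) (a (Suc k)) = a (Suc k)" by simp
  thus ?thesis by blast
qed

lemma AllWin_two_fix:
  assumes "AllWin l r g k" "0 < l"
  shows "\<not> (g True True = True \<and> g False False = False)"
proof
  assume h: "g True True = True \<and> g False False = False"
  have "Sys l r g (\<lambda>_. True)" "Sys l r g (\<lambda>_. False)" using Sys_const h by auto
  hence "win (max l r) k (\<lambda>_. True) (\<lambda>_. False)" using assms unfolding AllWin_def by blast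
  thus False using assms unfolding win_def by (auto dest: spec[of _ 0])
qed

lemma ess_cases:
  assumes "ess g"
  shows "(\<exists>c. \<forall>u v. g u v = ((u \<noteq> v) \<noteq> c)) \<or>
         (\<exists>\<alpha> \<beta> c. \<forall>u v. g u v = (if u = \<alpha> \<and> v = \<beta> then \<not> c else c))"
  using assms unfolding ess_def
  apply (simp only: ex_bool_eq all_bool_eq)
  apply (cases "g True True"; cases "g True False"; cases "g False True"; cases "g False False")
  apply simp_all
  done

lemma win_diff: "0 < L \<Longrightarrow> win L k a b \<Longrightarrow> a k = b k"
  unfolding win_def by (auto dest: spec[of _ 0])

lemma xor_non:
  assumes "0 < l" "l < r" "\<forall>u v. g u v = ((u \<noteq> v) \<noteq> c)" "r - 1 \<le> k"
  shows "\<not> AllWin l r g k"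
proof
  assume aw: "AllWin l r g k"
  define a where "a = gen l r g True (\<lambda>_. False) (\<lambda>_. False)"
  define b where "b = gen l r g False (\<lambda>_. False) (\<lambda>_. False)"
  have sa: "Sys l r g a" and sb: "Sys l r g b" using Sys_gen assms a_def b_def by auto
  have mr: "max l r = r" using assms by simp
  have "\<forall>t. r - 1 \<le> t \<longrightarrow> \<not> win r t a b"
  proof (intro allI impI)
    fix t assume "r - 1 \<le> t"
    thus "\<not> win r t a b"
    proof (induction t rule: dec_induct)
      case base
      have "r - 1 < r" using assms by simp
      moreover have "a (r - 1 - (r - 1)) \<noteq> b (r - 1 - (r - 1))" by (simp add: a_def b_def)
      ultimately show ?case unfolding win_def by blast
    next
      case (step t)
      show ?case
      proof
        assume w: "win r (Suc t) a b"
        have "win r t a b" unfolding win_def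
        proof (intro allI impI)
          fix j assume j: "j < r"
          show "a (t - j) = b (t - j)"
          proof (cases "j + 1 < r")
            case True
            hence "Suc j < r" by simp
            with w have "a (Suc t - Suc j) = b (Suc t - Suc j)" unfolding win_def by (auto dest: spec[of _ "Suc j"])
            thus ?thesis by simp
          next
            case False
            hence jr: "j = r - 1" using j by simp
            have t1: "0 < Suc t" "l \<le> Suc t" "r \<le> Suc t" using step assms by auto
            have ea: "a (Suc t) = g (a (Suc t - l)) (a (Suc t - r))" by (rule Sys_rec[OF sa t1])
            have eb: "b (Suc t) = g (b (Suc t - l)) (b (Suc t - r))" by (rule Sys_rec[OF sb t1])
            from w have wa: "\<forall>j<r. a (Suc t - j) = b (Suc t - j)" unfolding win_def .
            have "0 < r" "l < r" using assms by auto
            have "a (Suc t - 0) = b (Suc t - 0)" using wa[rule_format, OF \<open>0 < r\<close>] .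
            moreover have "a (Suc t - l) = b (Suc t - l)" using wa[rule_format, OF \<open>l < r\<close>] .
            ultimately have "a (Suc t) = b (Suc t)" "a (Suc t - l) = b (Suc t - l)" by simp_all
            hence "a (Suc t - r) = b (Suc t - r)" using ea eb assms(3) by (simp, blast)
            moreover have "Suc t - r = t - j" using jr t1 assms by simp
            ultimately show ?thesis by simp
          qed
        qed
        thus False using step.IH by blast
      qed
    qed
  qed
  moreover have "win r k a b" using aw sa sb mr unfolding AllWin_def by metis
  ultimately show False using assms by blast
qed

lemma gconst:
  assumes "2 \<le> r" "ess g" "\<forall>e. g e e = \<kappa>"
  shows "AllWin r r g (2*r - 1) \<and> \<not> AllWin r r g (2*r - 2)"
proof
  have tail: "a t = \<kappa>" if "Sys r r g a" "r \<le> t" for a t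
    using Sys_rec[OF that(1), of t] that assms by simp
  show "AllWin r r g (2*r - 1)" unfolding AllWin_def win_def
  proof (intro allI impI)
    fix a b j assume "Sys r r g a" "Sys r r g b" "j < max r r"
    thus "a (2 * r - 1 - j) = b (2 * r - 1 - j)" using tail[of a] tail[of b] by simp
  qed
  obtain u v where uv: "g u v \<noteq> \<kappa>" using assms unfolding ess_def by metis
  define a where "a = gen r r g \<kappa> (\<lambda>_. u) (\<lambda>_. v)"
  have sa: "Sys r r g a" using Sys_gen assms a_def by auto
  have sb: "Sys r r g (\<lambda>_. \<kappa>)" using Sys_const assms by auto
  have "a (r - 1) = g u v"
  proof -
    obtain t where t: "r - 1 = Suc t" using assms by (cases "r - 1") auto
    have "\<not> r \<le> Suc t" using t by simp
    thus ?thesis unfolding a_def t by simp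
  qed
  show "\<not> AllWin r r g (2*r - 2)"
  proof
    assume "AllWin r r g (2*r - 2)"
    hence "win r (2*r-2) a (\<lambda>_. \<kappa>)" using sa sb unfolding AllWin_def by fastforce
    moreover have "r - 1 < r" "2*r - 2 - (r - 1) = r - 1" using assms by auto
    ultimately have "a (r - 1) = \<kappa>" unfolding win_def by metis
    with \<open>a (r - 1) = g u v\<close> uv show False by simp
  qed
qed

lemma dvd_sub_contra: "(r::nat) dvd t \<Longrightarrow> r dvd (t - l) \<Longrightarrow> l \<le> t \<Longrightarrow> 0 < l \<Longrightarrow> l < r \<Longrightarrow> False"
proof -
  assume "r dvd t" "r dvd (t - l)" "l \<le> t" "0 < l" "l < r"
  have "r dvd (t - (t - l))" using \<open>r dvd t\<close> \<open>r dvd (t - l)\<close> by (rule dvd_diff_nat)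
  hence "r dvd l" using \<open>l \<le> t\<close> by simp
  thus False using \<open>0 < l\<close> \<open>l < r\<close> nat_dvd_not_less by blast
qed

lemma per_non:
  assumes "0 < m" "m \<le> r" "max l r = r" "r - 1 \<le> k"
    "Sys l r g (\<lambda>t. if m dvd t then \<not> c else c)" "g c c = c"
  shows "\<not> AllWin l r g k"
proof
  assume "AllWin l r g k"
  moreover have "Sys l r g (\<lambda>_. c)" using Sys_const assms by auto
  ultimately have w: "win r k (\<lambda>t. if m dvd t then \<not> c else c) (\<lambda>_. c)"
    using assms(3,5) unfolding AllWin_def by metis
  have j: "k mod m < r" using assms by (meson order_less_le_trans mod_less_divisor)
  have "m dvd (k - k mod m)" by (simp add: minus_mod_eq_mult_div)
  with w j show False unfolding win_def by (metis (full_types))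
qed

lemma caseC_Sys:
  assumes "0 < l" "l < r" "\<forall>u v. g u v = (if u = c \<and> v = (\<not> c) then \<not> c else c)"
  shows "Sys l r g (\<lambda>t. if r dvd t then \<not> c else c)"
  unfolding Sys_def
proof (rule exI[of _ "\<lambda>_. c"], rule exI[of _ "\<lambda>_. c"], rule allI)
  fix t
  let ?a = "\<lambda>t. if r dvd t then \<not> c else c"
  show "?a (Suc t) = g (ext (\<lambda>_. c) l ?a t) (ext (\<lambda>_. c) r ?a t)"
  proof (cases "r \<le> Suc t")
    case True
    have lt: "l \<le> Suc t" using True assms by simp
    have e1: "r dvd (Suc t - r) \<longleftrightarrow> r dvd Suc t" using True by (simp add: dvd_minus_self)
    have e2: "r dvd Suc t \<Longrightarrow> \<not> r dvd (Suc t - l)" using dvd_sub_contra[of r "Suc t" l] lt assms by blast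
    show ?thesis unfolding ext_def using True lt e1 e2 assms(3) by auto
  next
    case False
    hence "\<not> r dvd Suc t" using nat_dvd_not_less[of "Suc t" r] by simp
    thus ?thesis unfolding ext_def using False assms(3) by auto
  qed
qed

lemma caseD_Sys_non:
  assumes "0 < l" "l < r" "\<not> l dvd r" "\<forall>u v. g u v = (if u = (\<not> c) \<and> v = c then \<not> c else c)"
  shows "Sys l r g (\<lambda>t. if l dvd t then \<not> c else c)"
  unfolding Sys_def
proof (rule exI[of _ "\<lambda>_. c"], rule exI[of _ "\<lambda>t. if l dvd (r - Suc t) then \<not> c else c"], rule allI)
  fix t
  let ?a = "\<lambda>t. if l dvd t then \<not> c else c"
  let ?uB = "\<lambda>t. if l dvd (r - Suc t) then \<not> c else c"
  show "?a (Suc t) = g (ext (\<lambda>_. c) l ?a t) (ext ?uB r ?a t)"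
  proof (cases "l \<le> Suc t")
    case True
    have e1: "l dvd (Suc t - l) \<longleftrightarrow> l dvd Suc t" using True by (simp add: dvd_minus_self)
    have e2: "\<not> l dvd (Suc t - r)" if "l dvd Suc t" "r \<le> Suc t"
    proof
      assume "l dvd (Suc t - r)"
      have "l dvd (Suc t - (Suc t - r))" using that(1) \<open>l dvd (Suc t - r)\<close> by (rule dvd_diff_nat)
      moreover have "Suc t - (Suc t - r) = r" using that(2) by simp
      ultimately show False using assms(3) by simp
    qed
    have e3: "\<not> l dvd (r - Suc t)" if "l dvd Suc t" "\<not> r \<le> Suc t"
    proof
      assume "l dvd (r - Suc t)"
      have "l dvd (r - Suc t + Suc t)" using \<open>l dvd (r - Suc t)\<close> that(1) by (rule dvd_add)
      moreover have "r - Suc t + Suc t = r" using that(2) by simp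
      ultimately show False using assms(3) by simp
    qed
    show ?thesis unfolding ext_def using True e1 e2 e3 assms(4) by auto
  next
    case False
    hence "\<not> l dvd Suc t" using nat_dvd_not_less[of "Suc t" l] by simp
    thus ?thesis unfolding ext_def using False assms(4) by auto
  qed
qed

lemma caseD_upper:
  assumes "0 < l" "l \<le> r" "l dvd r" "\<forall>u v. g u v = (if u = (\<not> c) \<and> v = c then \<not> c else c)"
  shows "AllWin l r g (2*r - 1)"
proof -
  have tail: "a t = c" if sa: "Sys l r g a" and tr: "r \<le> t" for a t
  proof (rule ccontr)
    assume nt: "a t \<noteq> c"
    obtain uA uB where h: "\<forall>t. a (Suc t) = g (ext uA l a t) (ext uB r a t)"
      using sa unfolding Sys_def by blast
    obtain m where m: "r = l * m" using assms(3) by blast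
    have chain: "k \<le> m \<Longrightarrow> a (t - k * l) \<noteq> c" for k
    proof (induction k)
      case 0 then show ?case using nt by simp
    next
      case (Suc k)
      hence ih: "a (t - k * l) \<noteq> c" by simp
      have "Suc k * l \<le> m * l" using Suc.prems by (rule mult_le_mono1)
      hence "k * l + l \<le> r" using m by (simp add: algebra_simps)
      hence le: "l \<le> t - k * l" using tr by simp
      then obtain s where s: "t - k * l = Suc s" using assms(1) by (cases "t - k * l") auto
      have "a (Suc s) = g (ext uA l a s) (ext uB r a s)" using h by blast
      moreover have "ext uA l a s = a (t - k * l - l)" unfolding ext_def using le s by simp
      ultimately have "a (t - k * l - l) = (\<not> c)" using ih s assms(4) by (auto split: if_splits)
      moreover have "t - k * l - l = t - Suc k * l" by (simp add: algebra_simps)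
      ultimately show ?case by simp
    qed
    have "a (t - r) \<noteq> c" using chain[of m] m by (simp add: mult.commute)
    moreover have "a t = g (a (t - l)) (a (t - r))"
      by (rule Sys_rec[OF sa]) (use tr assms in auto)
    ultimately show False using nt assms(4) by (auto split: if_splits)
  qed
  show ?thesis unfolding AllWin_def win_def
  proof (intro allI impI)
    fix a b j assume "Sys l r g a" "Sys l r g b" "j < max l r"
    moreover have "r \<le> 2 * r - 1 - j" using \<open>j < max l r\<close> assms by simp
    ultimately show "a (2 * r - 1 - j) = b (2 * r - 1 - j)" using tail[of a] tail[of b] by simp
  qed
qed

lemma caseD_lower:
  assumes "0 < l" "l < r" "l dvd r" "\<forall>u v. g u v = (if u = (\<not> c) \<and> v = c then \<not> c else c)"
  shows "\<not> AllWin l r g (2*r - 2)"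
proof
  assume aw: "AllWin l r g (2*r - 2)"
  let ?a = "\<lambda>t. if l dvd Suc t \<and> t < r then \<not> c else c"
  have sa: "Sys l r g ?a" unfolding Sys_def
  proof (rule exI[of _ "\<lambda>t. if Suc (Suc t) = l then \<not> c else c"], rule exI[of _ "\<lambda>_. c"], rule allI)
    fix t
    show "?a (Suc t) = g (ext (\<lambda>t. if Suc (Suc t) = l then \<not> c else c) l ?a t) (ext (\<lambda>_. c) r ?a t)"
    proof (cases "l \<le> Suc t")
      case False
      have "l dvd Suc (Suc t) \<longleftrightarrow> Suc (Suc t) = l"
        using False by (auto dest: dvd_imp_le)
      thus ?thesis unfolding ext_def using False assms by auto
    next
      case lt: True
      have e1: "l dvd Suc (Suc t - l) \<longleftrightarrow> l dvd Suc (Suc t)"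
        using lt dvd_minus_self[of l "Suc (Suc t)"] by (simp add: Suc_diff_le)
      show ?thesis
      proof (cases "r \<le> Suc t")
        case False
        thus ?thesis unfolding ext_def using lt e1 assms(4) by auto
      next
        case True
        have e2: "l dvd Suc (Suc t - r) \<and> Suc t - r < r" if "l dvd Suc (Suc t)" "Suc t - l < r"
        proof
          have "l dvd (Suc (Suc t) - r)" using that(1) assms(3) by (rule dvd_diff_nat)
          thus "l dvd Suc (Suc t - r)" using True by (simp add: Suc_diff_le)
          show "Suc t - r < r" using that(2) assms True by linarith
        qed
        show ?thesis unfolding ext_def using lt True e1 e2 assms(4) by auto
      qed
    qed
  qed
  have sb: "Sys l r g (\<lambda>_. c)" using Sys_const assms by auto
  have "win (max l r) (2*r - 2) ?a (\<lambda>_. c)" using aw[unfolded AllWin_def, rule_format, OF sa sb] .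
  moreover have "max l r = r" using assms by simp
  ultimately have "win r (2*r - 2) ?a (\<lambda>_. c)" by simp
  moreover have "r - 1 < r" "2*r - 2 - (r - 1) = r - 1" using assms by auto
  ultimately have "?a (r - 1) = c" unfolding win_def by metis
  moreover have "Suc (r - 1) = r" using assms by simp
  ultimately show False using assms by simp
qed

lemma core_le:
  assumes "0 < l" "l \<le> r" "2 \<le> r" "ess g" "r - 1 \<le> k" "AllWin l r g k"
  shows "l dvd r \<and> AllWin l r g (2*r - 1) \<and> \<not> AllWin l r g (2*r - 2)"
proof -
  have mx: "max l r = r" using assms by simp
  have fx: "\<exists>e. g e e = e" using AllWin_fix[OF assms(6)] assms mx by simp
  have two: "\<not> (g True True = True \<and> g False False = False)" using AllWin_two_fix[OF assms(6)] assms by simp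
  from ess_cases[OF assms(4)] show ?thesis
  proof
    assume "\<exists>c. \<forall>u v. g u v = ((u \<noteq> v) \<noteq> c)"
    then obtain c where c: "\<forall>u v. g u v = ((u \<noteq> v) \<noteq> c)" by blast
    show ?thesis
    proof (cases "l = r")
      case True
      have "\<forall>e. g e e = c" using c by simp
      from gconst[OF assms(3,4) this] True show ?thesis by simp
    next
      case False
      hence "l < r" using assms by simp
      from xor_non[OF assms(1) this c] assms show ?thesis by simp
    qed
  next
    assume "\<exists>\<alpha> \<beta> c. \<forall>u v. g u v = (if u = \<alpha> \<and> v = \<beta> then \<not> c else c)"
    then obtain \<alpha> \<beta> c where g: "\<forall>u v. g u v = (if u = \<alpha> \<and> v = \<beta> then \<not> c else c)" by blast
    show ?thesis
    proof (cases "\<alpha> = \<beta>")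
      case True
      have False
      proof (cases "\<alpha> = c")
        case True
        with \<open>\<alpha> = \<beta>\<close> fx g show False by (cases c) auto
      next
        case False
        with \<open>\<alpha> = \<beta>\<close> two g show False by (cases c) auto
      qed
      thus ?thesis ..
    next
      case ab: False
      show ?thesis
      proof (cases "l = r")
        case True
        have "\<forall>e. g e e = c" using g ab by auto
        from gconst[OF assms(3,4) this] True show ?thesis by simp
      next
        case False
        hence lr: "l < r" using assms by simp
        have gcc: "g c c = c" using g ab by auto
        show ?thesis
        proof (cases "\<beta> = c")
          case False
          hence "\<beta> = (\<not> c)" "\<alpha> = c" using ab by auto
          hence g': "\<forall>u v. g u v = (if u = c \<and> v = (\<not> c) then \<not> c else c)" using g by simp
          have "\<not> AllWin l r g k"
            by (rule per_non[OF _ _ mx assms(5) caseC_Sys[OF assms(1) lr g'] gcc]) (use assms in auto)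
          with assms(6) show ?thesis by simp
        next
          case True
          hence "\<alpha> = (\<not> c)" using ab by auto
          hence g': "\<forall>u v. g u v = (if u = (\<not> c) \<and> v = c then \<not> c else c)" using g True by simp
          show ?thesis
          proof (cases "l dvd r")
            case True
            from caseD_upper[OF assms(1,2) True g'] caseD_lower[OF assms(1) lr True g'] True
            show ?thesis by simp
          next
            case False
            have "\<not> AllWin l r g k"
              by (rule per_non[OF _ _ mx assms(5) caseD_Sys_non[OF assms(1) lr False g'] gcc]) (use assms lr in auto)
            with assms(6) show ?thesis by simp
          qed
        qed
      qed
    qed
  qed
qed

lemma core:
  assumes "0 < l" "0 < r" "\<not> (l = 1 \<and> r = 1)" "ess g" "max l r - 1 \<le> k" "AllWin l r g k"
  shows "min l r dvd max l r \<and> AllWin l r g (2 * max l r - 1) \<and> \<not> AllWin l r g (2 * max l r - 2)"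
proof (cases "l \<le> r")
  case True
  have "2 \<le> r" using True assms by (cases "r = 1") auto
  thus ?thesis using core_le[of l r g k] assms True by simp
next
  case False
  have "AllWin r l (\<lambda>u v. g v u) k" using assms(6) AllWin_swap by blast
  moreover have "ess (\<lambda>u v. g v u)" using assms(4) ess_swap by blast
  moreover have "2 \<le> l" using False assms by auto
  ultimately have "r dvd l \<and> AllWin r l (\<lambda>u v. g v u) (2*l - 1) \<and> \<not> AllWin r l (\<lambda>u v. g v u) (2*l - 2)"
    using core_le[of r l "\<lambda>u v. g v u" k] assms False by simp
  thus ?thesis using False AllWin_swap[of l r g] by simp
qed

lemma core_exists:
  assumes "0 < l" "0 < r" "min l r dvd max l r"
  shows "AllWin l r (if l \<le> r then (\<lambda>u v. u \<and> \<not> v) else (\<lambda>u v. v \<and> \<not> u)) (2 * max l r - 1)"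
proof (cases "l \<le> r")
  case True
  have "AllWin l r (\<lambda>u v. u \<and> \<not> v) (2*r - 1)"
    by (rule caseD_upper[where c=False]) (use assms True in auto)
  thus ?thesis using True by simp
next
  case False
  have "AllWin r l (\<lambda>u v. u \<and> \<not> v) (2*l - 1)"
    by (rule caseD_upper[where c=False]) (use assms False in auto)
  hence "AllWin l r (\<lambda>u v. v \<and> \<not> u) (2*l - 1)" using AllWin_swap[of l r "\<lambda>u v. v \<and> \<not> u"] by simp
  thus ?thesis using False by simp
qed

lemma sys_unique:
  assumes "0 < l" "0 < r"
    "\<forall>t. a (Suc t) = g (ext uA l a t) (ext uB r a t)"
    "\<forall>t. b (Suc t) = g (ext uA' l b t) (ext uB' r b t)"
    "\<forall>t. Suc t < l \<longrightarrow> uA t = uA' t" "\<forall>t. Suc t < r \<longrightarrow> uB t = uB' t" "a 0 = b 0"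
  shows "a = b"
proof
  fix t show "a t = b t"
  proof (induction t rule: less_induct)
    case (less t)
    show ?case
    proof (cases t)
      case 0 thus ?thesis using assms by simp
    next
      case (Suc s)
      have "ext uA l a s = ext uA' l b s"
        unfolding ext_def using less[of "Suc s - l"] Suc assms(1,5) by auto
      moreover have "ext uB r a s = ext uB' r b s"
        unfolding ext_def using less[of "Suc s - r"] Suc assms(2,6) by auto
      ultimately show ?thesis using assms(3,4) Suc by simp
    qed
  qed
qed



definition pd :: "nat \<Rightarrow> nat \<Rightarrow> nat" where "pd l i = (if i = l then 0 else i - 1)"
definition qe :: "nat \<Rightarrow> nat \<Rightarrow> nat" where "qe l r = (if r = 1 then 0 else l + r - 2)"
definition vB :: "nat \<Rightarrow> nat \<Rightarrow> nat" where "vB l j = (if j = 0 then 0 else l + j - 1)"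

primrec cum :: "(nat \<Rightarrow> bool) \<Rightarrow> nat \<Rightarrow> bool" where
  "cum s 0 = False"
| "cum s (Suc j) = (cum s j \<noteq> s (Suc j))"

lemma arcsA: "0 < l \<Longrightarrow> (j, i) \<in> cycle_arcs [0..<l] \<longleftrightarrow> j < l \<and> i = (if j = l - 1 then 0 else Suc j)"
proof -
  assume l: "0 < l"
  have "(j, i) \<in> cycle_arcs [0..<l] \<longleftrightarrow> (\<exists>k<l. j = k \<and> i = Suc k mod l)"
  proof
    assume "(j, i) \<in> cycle_arcs [0..<l]"
    thus "\<exists>k<l. j = k \<and> i = Suc k mod l" unfolding cycle_arcs_def by auto
  next
    assume "\<exists>k<l. j = k \<and> i = Suc k mod l"
    then obtain k where k: "k < l" "j = k" "i = Suc k mod l" by blast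
    thus "(j, i) \<in> cycle_arcs [0..<l]" unfolding cycle_arcs_def by (auto intro!: exI[of _ k])
  qed
  also have "\<dots> \<longleftrightarrow> j < l \<and> i = (if j = l - 1 then 0 else Suc j)"
  proof
    assume "\<exists>k<l. j = k \<and> i = Suc k mod l"
    then obtain k where k: "k < l" "j = k" "i = Suc k mod l" by blast
    show "j < l \<and> i = (if j = l - 1 then 0 else Suc j)"
    proof (cases "k = l - 1")
      case True thus ?thesis using k l by simp
    next
      case False hence "Suc k < l" using k by simp
      thus ?thesis using k False by simp
    qed
  next
    assume h: "j < l \<and> i = (if j = l - 1 then 0 else Suc j)"
    show "\<exists>k<l. j = k \<and> i = Suc k mod l"
    proof (cases "j = l - 1")
      case True thus ?thesis using h l by auto
    next
      case False hence "Suc j < l" using h by linarith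
      thus ?thesis using h False by auto
    qed
  qed
  finally show ?thesis .
qed

lemma nthB: "k < r \<Longrightarrow> (0 # [l..<l + r - 1]) ! k = vB l k"
  by (cases k) (auto simp: vB_def)

lemma arcsB: "0 < r \<Longrightarrow> (j, i) \<in> cycle_arcs (0 # [l..<l + r - 1]) \<longleftrightarrow>
   (\<exists>k<r. j = vB l k \<and> i = (if k = r - 1 then 0 else vB l (Suc k)))"
proof -
  assume r: "0 < r"
  have len: "length (0 # [l..<l + r - 1]) = r" using r by simp
  have "(j, i) \<in> cycle_arcs (0 # [l..<l + r - 1]) \<longleftrightarrow>
     (\<exists>k<r. j = (0 # [l..<l + r - 1]) ! k \<and> i = (0 # [l..<l + r - 1]) ! (Suc k mod r))"
    unfolding cycle_arcs_def len by auto
  also have "\<dots> \<longleftrightarrow> (\<exists>k<r. j = vB l k \<and> i = (if k = r - 1 then 0 else vB l (Suc k)))"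
  proof (intro ex_cong1 conj_cong refl)
    fix k
    assume "k < r"
    show "j = (0 # [l..<l + r - 1]) ! k \<longleftrightarrow> j = vB l k" using nthB[OF \<open>k < r\<close>] by simp
    show "i = (0 # [l..<l + r - 1]) ! (Suc k mod r) \<longleftrightarrow> i = (if k = r - 1 then 0 else vB l (Suc k))"
    proof (cases "k = r - 1")
      case True thus ?thesis using r by simp
    next
      case False hence sk: "Suc k < r" using \<open>k < r\<close> by simp
      hence e: "Suc k mod r = Suc k" by simp
      show ?thesis unfolding e using nthB[OF sk] False by (simp del: nth_Cons_Suc)
    qed
  qed
  finally show ?thesis .
qed

lemma dc_char:
  assumes "0 < l" "0 < r"
  shows "(j, i) \<in> double_cycle l r \<longleftrightarrow>
     (i = 0 \<and> (j = l - 1 \<or> j = qe l r)) \<or> (0 < i \<and> i < l + r - 1 \<and> j = pd l i)"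
proof
  assume "(j, i) \<in> double_cycle l r"
  hence "(j, i) \<in> cycle_arcs [0..<l] \<or> (j, i) \<in> cycle_arcs (0 # [l..<l + r - 1])"
    unfolding double_cycle_def by simp
  thus "(i = 0 \<and> (j = l - 1 \<or> j = qe l r)) \<or> (0 < i \<and> i < l + r - 1 \<and> j = pd l i)"
  proof
    assume "(j, i) \<in> cycle_arcs [0..<l]"
    hence h: "j < l" "i = (if j = l - 1 then 0 else Suc j)" using arcsA assms by auto
    show ?thesis using h assms by (auto simp: pd_def)
  next
    assume "(j, i) \<in> cycle_arcs (0 # [l..<l + r - 1])"
    then obtain k where k: "k < r" "j = vB l k" "i = (if k = r - 1 then 0 else vB l (Suc k))"
      using arcsB assms by auto
    show ?thesis
    proof (cases "k = r - 1")
      case True thus ?thesis using k assms by (auto simp: vB_def qe_def)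
    next
      case False
      thus ?thesis using k assms by (auto simp: vB_def pd_def)
    qed
  qed
next
  assume h: "(i = 0 \<and> (j = l - 1 \<or> j = qe l r)) \<or> (0 < i \<and> i < l + r - 1 \<and> j = pd l i)"
  have A: "(j, i) \<in> double_cycle l r" if "(j, i) \<in> cycle_arcs [0..<l]"
    using that unfolding double_cycle_def by simp
  have B: "(j, i) \<in> double_cycle l r" if "(j, i) \<in> cycle_arcs (0 # [l..<l + r - 1])"
    using that unfolding double_cycle_def by simp
  show "(j, i) \<in> double_cycle l r"
  proof (cases "i = 0")
    case True
    with h have "j = l - 1 \<or> j = qe l r" by simp
    thus ?thesis
    proof
      assume "j = l - 1" thus ?thesis using A arcsA assms True by simp
    next
      assume j: "j = qe l r"
      have "\<exists>k<r. j = vB l k \<and> i = (if k = r - 1 then 0 else vB l (Suc k))"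
        using j True assms by (intro exI[of _ "r - 1"]) (auto simp: vB_def qe_def)
      thus ?thesis using B arcsB assms by blast
    qed
  next
    case False
    with h have i: "0 < i" "i < l + r - 1" "j = pd l i" by auto
    show ?thesis
    proof (cases "i < l")
      case True
      have "(j, i) \<in> cycle_arcs [0..<l]" using arcsA[OF assms(1)] i True by (auto simp: pd_def)
      thus ?thesis by (rule A)
    next
      case False
      have "\<exists>k<r. j = vB l k \<and> i = (if k = r - 1 then 0 else vB l (Suc k))"
        using i False assms by (intro exI[of _ "i - l"]) (auto simp: vB_def pd_def)
      thus ?thesis using B arcsB assms by blast
    qed
  qed
qed

lemma dep_aux:
  assumes "finite D"
  shows "\<forall>x. x \<in> conf V \<longrightarrow> {j. x j \<noteq> y j} \<subseteq> D \<longrightarrow> (\<forall>j\<in>D. (j, i) \<notin> interaction_graph V f)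
     \<longrightarrow> y \<in> conf V \<longrightarrow> i \<in> V \<longrightarrow> f x i = f y i"
  using assms
proof (induction D rule: finite_induct)
  case empty
  show ?case by (auto simp: fun_eq_iff)
next
  case (insert j D)
  show ?case
  proof (intro allI impI)
    fix x assume x: "x \<in> conf V" and sub: "{j'. x j' \<noteq> y j'} \<subseteq> insert j D"
      and na: "\<forall>j'\<in>insert j D. (j', i) \<notin> interaction_graph V f" and y: "y \<in> conf V" and i: "i \<in> V"
    define x' where "x' = x(j := y j)"
    have x': "x' \<in> conf V" using x y unfolding x'_def conf_def by auto
    have "{j'. x' j' \<noteq> y j'} \<subseteq> D" using sub insert.hyps unfolding x'_def by auto
    hence e1: "f x' i = f y i" using insert.IH x' na y i by blast
    have "f x i = f x' i"
    proof (cases "x j = y j")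
      case True show ?thesis unfolding x'_def using True[symmetric] by simp
    next
      case False
      hence jV: "j \<in> V" using x y unfolding conf_def by auto
      have "(j, i) \<notin> interaction_graph V f" using na by simp
      hence "f x i = f (x(j := \<not> x j)) i" using x jV i unfolding interaction_graph_def by auto
      moreover have "x(j := \<not> x j) = x'" unfolding x'_def using False by auto
      ultimately show ?thesis by simp
    qed
    thus "f x i = f y i" using e1 by simp
  qed
qed

lemma dep:
  assumes "finite V" "x \<in> conf V" "y \<in> conf V" "i \<in> V"
    "\<And>j. j \<in> V \<Longrightarrow> (j, i) \<in> interaction_graph V f \<Longrightarrow> x j = y j"
  shows "f x i = f y i"
proof -
  have fin: "finite {j \<in> V. x j \<noteq> y j}" using assms(1) by simp
  have "{j. x j \<noteq> y j} \<subseteq> {j \<in> V. x j \<noteq> y j}" using assms(2,3) unfolding conf_def by auto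
  moreover have "\<forall>j\<in>{j \<in> V. x j \<noteq> y j}. (j, i) \<notin> interaction_graph V f" using assms(5) by auto
  ultimately show ?thesis using dep_aux[OF fin] assms by blast
qed

lemma const_iter_mono:
  assumes "boolfun V f" "const_iter V f k" "k \<le> k'"
  shows "const_iter V f k'"
  using assms(3)
proof (induction k' rule: dec_induct)
  case base thus ?case using assms(2) .
next
  case (step m)
  then obtain c where c: "\<forall>x\<in>conf V. (f ^^ m) x = c" unfolding const_iter_def by blast
  have "\<forall>x\<in>conf V. (f ^^ Suc m) x = c"
    using c assms(1) unfolding boolfun_def by (simp add: funpow_Suc_right del: funpow.simps)
  thus ?case unfolding const_iter_def by blast
qed



definition zero :: "nat \<Rightarrow> bool" where "zero = (\<lambda>_. False)"

locale DC =
  fixes l r :: nat and f :: "(nat \<Rightarrow> bool) \<Rightarrow> (nat \<Rightarrow> bool)"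
  assumes l0: "0 < l" and r0: "0 < r" and nt: "\<not> (l = 1 \<and> r = 1)"
    and adm: "admits {..<l + r - 1} (double_cycle l r) f"
begin

abbreviation "V \<equiv> {..<l + r - 1}"
definition "sg i = f zero i"
definition "SA = cum sg"
definition "SB = cum (\<lambda>j. sg (vB l j))"
definition "p = l - 1"
definition "q = qe l r"
definition "h u v = f (zero(p := u, q := v)) 0"
definition "gg u v = h (u \<noteq> SA (l - 1)) (v \<noteq> SB (r - 1))"
definition "X x t = (f ^^ t) x"
definition "a x t = X x t 0"

lemma bf: "boolfun V f" using adm unfolding admits_def by simp
lemma ig: "interaction_graph V f = double_cycle l r" using adm unfolding admits_def by simp

lemma zero_conf: "zero \<in> conf V" unfolding zero_def conf_def by simp

lemma pq: "p < l + r - 1" "q < l + r - 1" "p \<noteq> q"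
  using l0 r0 nt unfolding p_def q_def qe_def by auto

lemma upd_conf: "x \<in> conf V \<Longrightarrow> k \<in> V \<Longrightarrow> x(k := b) \<in> conf V"
  unfolding conf_def by auto

lemma ig_in: "j \<in> V \<Longrightarrow> (j, i) \<in> interaction_graph V f \<longleftrightarrow>
    (i = 0 \<and> (j = p \<or> j = q)) \<or> (0 < i \<and> i < l + r - 1 \<and> j = pd l i)"
  unfolding ig dc_char[OF l0 r0] p_def q_def by simp

lemma pd_V: "0 < i \<Longrightarrow> i < l + r - 1 \<Longrightarrow> pd l i < l + r - 1"
  unfolding pd_def by auto

lemma pd_ne: "0 < i \<Longrightarrow> pd l i \<noteq> i"
  unfolding pd_def by auto

lemma f_single:
  assumes "x \<in> conf V" "0 < i" "i < l + r - 1"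
  shows "f x i = f (zero(pd l i := x (pd l i))) i"
proof (rule dep[where V = V and f = f and x = x and y = "zero(pd l i := x (pd l i))" and i = i])
  show "zero(pd l i := x (pd l i)) \<in> conf V" using upd_conf[OF zero_conf] pd_V assms by simp
  fix j assume "j \<in> V" "(j, i) \<in> interaction_graph V f"
  hence "j = pd l i" using ig_in assms by auto
  thus "x j = (zero(pd l i := x (pd l i))) j" by simp
qed (use assms in auto)

lemma f_in:
  assumes "x \<in> conf V" "0 < i" "i < l + r - 1"
  shows "f x i = (x (pd l i) \<noteq> sg i)"
proof -
  let ?k = "pd l i"
  have kV: "?k \<in> V" using pd_V assms by simp
  have arc: "(?k, i) \<in> interaction_graph V f" using ig_in kV assms by auto
  then obtain b where b: "b \<in> conf V" "f b i \<noteq> f (b(?k := \<not> b ?k)) i"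
    unfolding interaction_graph_def by auto
  have bc: "b(?k := \<not> b ?k) \<in> conf V" using upd_conf[OF b(1) kV] .
  have "f b i = f (zero(?k := b ?k)) i" using f_single[OF b(1) assms(2,3)] .
  moreover have "f (b(?k := \<not> b ?k)) i = f (zero(?k := \<not> b ?k)) i"
    using f_single[OF bc assms(2,3)] by simp
  ultimately have diff: "f (zero(?k := True)) i \<noteq> f (zero(?k := False)) i"
    using b(2) by (cases "b ?k") auto
  have z: "zero(?k := False) = zero" unfolding zero_def by auto
  show ?thesis
  proof (cases "x ?k")
    case True
    thus ?thesis using f_single[OF assms] diff z unfolding sg_def by auto
  next
    case False
    thus ?thesis using f_single[OF assms] z unfolding sg_def by auto
  qed
qed

lemma f_0:
  assumes "x \<in> conf V"
  shows "f x 0 = h (x p) (x q)"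
  unfolding h_def
proof (rule dep[where V = V and f = f and x = x and y = "zero(p := x p, q := x q)" and i = 0])
  show "zero(p := x p, q := x q) \<in> conf V" using upd_conf zero_conf pq by simp
  fix j assume "j \<in> V" "(j, 0) \<in> interaction_graph V f"
  hence "j = p \<or> j = q" using ig_in by auto
  thus "x j = (zero(p := x p, q := x q)) j" using pq by auto
qed (use assms l0 r0 nt in auto)

lemma h_ess: "ess h"
proof -
  have pV: "p \<in> V" and qV: "q \<in> V" using pq by auto
  have "(p, 0) \<in> interaction_graph V f" using ig_in pV by simp
  then obtain b where b: "b \<in> conf V" "f b 0 \<noteq> f (b(p := \<not> b p)) 0"
    unfolding interaction_graph_def by auto
  have "h (b p) (b q) \<noteq> h (\<not> b p) (b q)"
    using b f_0[OF b(1)] f_0[OF upd_conf[OF b(1) pV]] pq by auto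
  hence e1: "\<exists>v. h True v \<noteq> h False v" by (cases "b p") auto
  have "(q, 0) \<in> interaction_graph V f" using ig_in qV by simp
  then obtain c where c: "c \<in> conf V" "f c 0 \<noteq> f (c(q := \<not> c q)) 0"
    unfolding interaction_graph_def by auto
  have "h (c p) (c q) \<noteq> h (c p) (\<not> c q)"
    using c f_0[OF c(1)] f_0[OF upd_conf[OF c(1) qV]] pq by auto
  hence e2: "\<exists>u. h u True \<noteq> h u False" by (cases "c q") auto
  show ?thesis unfolding ess_def using e1 e2 by blast
qed

lemma gg_ess: "ess gg"
proof -
  obtain v where v: "h True v \<noteq> h False v" using h_ess unfolding ess_def by blast
  obtain u where u: "h u True \<noteq> h u False" using h_ess unfolding ess_def by blast
  have "gg True (v \<noteq> SB (r - 1)) \<noteq> gg False (v \<noteq> SB (r - 1))"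
    using v unfolding gg_def by (cases "SA (l - 1)"; cases "SB (r - 1)") auto
  moreover have "gg (u \<noteq> SA (l - 1)) True \<noteq> gg (u \<noteq> SA (l - 1)) False"
    using u unfolding gg_def by (cases "SA (l - 1)"; cases "SB (r - 1)") auto
  ultimately show ?thesis unfolding ess_def by blast
qed

lemma X_conf: "x \<in> conf V \<Longrightarrow> X x t \<in> conf V"
  unfolding X_def by (induction t) (use bf in \<open>auto simp: boolfun_def\<close>)

lemma X_Suc: "X x (Suc t) = f (X x t)"
  unfolding X_def by simp

lemma chain:
  assumes x: "x \<in> conf V" and v0: "v 0 = 0"
    and vs: "\<And>j. 0 < j \<Longrightarrow> j < m \<Longrightarrow> 0 < v j \<and> v j < l + r - 1 \<and> pd l (v j) = v (j - 1)"
  shows "j < m \<Longrightarrow> X x t (v j) = (if j \<le> t then (a x (t - j) \<noteq> cum (\<lambda>j. sg (v j)) j)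
           else ((x (v (j - t)) \<noteq> cum (\<lambda>j. sg (v j)) j) \<noteq> cum (\<lambda>j. sg (v j)) (j - t)))"
proof (induction t arbitrary: j)
  case 0
  show ?case using v0 unfolding a_def X_def by auto
next
  case (Suc t)
  let ?S = "cum (\<lambda>j. sg (v j))"
  show ?case
  proof (cases "j = 0")
    case True thus ?thesis using v0 unfolding a_def by simp
  next
    case False
    hence j: "0 < j" "j < m" using Suc.prems by auto
    have vj: "0 < v j" "v j < l + r - 1" "pd l (v j) = v (j - 1)" using vs[OF j] by auto
    have "X x (Suc t) (v j) = (X x t (v (j - 1)) \<noteq> sg (v j))"
      unfolding X_Suc using f_in[OF X_conf[OF x] vj(1,2)] vj(3) by simp
    moreover have Sj: "?S j = (?S (j - 1) \<noteq> sg (v j))"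
      using j by (cases j) auto
    moreover have ih: "X x t (v (j - 1)) = (if j - 1 \<le> t then (a x (t - (j - 1)) \<noteq> ?S (j - 1))
           else ((x (v (j - 1 - t)) \<noteq> ?S (j - 1)) \<noteq> ?S (j - 1 - t)))"
      using Suc.IH[of "j - 1"] j by simp
    ultimately show ?thesis
    proof (cases "j \<le> Suc t")
      case True
      hence "j - 1 \<le> t" "t - (j - 1) = Suc t - j" using j by auto
      thus ?thesis using True \<open>X x (Suc t) (v j) = _\<close> Sj ih by auto
    next
      case False
      hence "\<not> j - 1 \<le> t" "j - 1 - t = j - Suc t" by auto
      thus ?thesis using False \<open>X x (Suc t) (v j) = _\<close> Sj ih by auto
    qed
  qed
qed

lemma XA:
  assumes "x \<in> conf V" "j < l"
  shows "X x t j = (if j \<le> t then (a x (t - j) \<noteq> SA j) else ((x (j - t) \<noteq> SA j) \<noteq> SA (j - t)))"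
proof -
  have vs: "\<And>j. 0 < j \<Longrightarrow> j < l \<Longrightarrow> 0 < j \<and> j < l + r - 1 \<and> pd l j = j - 1"
    using r0 by (auto simp: pd_def)
  show ?thesis using chain[of x "\<lambda>j. j" l j t, OF assms(1) _ vs assms(2)] unfolding SA_def by simp
qed

lemma XB:
  assumes "x \<in> conf V" "j < r"
  shows "X x t (vB l j) = (if j \<le> t then (a x (t - j) \<noteq> SB j) else ((x (vB l (j - t)) \<noteq> SB j) \<noteq> SB (j - t)))"
proof -
  have vs: "\<And>j. 0 < j \<Longrightarrow> j < r \<Longrightarrow> 0 < vB l j \<and> vB l j < l + r - 1 \<and> pd l (vB l j) = vB l (j - 1)"
    using l0 by (auto simp: pd_def vB_def)
  have v0: "vB l 0 = 0" by (simp add: vB_def)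
  show ?thesis using chain[of x "vB l" r j t, OF assms(1) v0 vs assms(2)] unfolding SB_def by simp
qed

lemma q_vB: "q = vB l (r - 1)"
  unfolding q_def qe_def vB_def using r0 by auto

abbreviation "uAx x \<equiv> (\<lambda>t. x (l - 1 - t) \<noteq> SA (l - 1 - t))"
abbreviation "uBx x \<equiv> (\<lambda>t. x (vB l (r - 1 - t)) \<noteq> SB (r - 1 - t))"

lemma a_rec:
  assumes x: "x \<in> conf V"
  shows "\<forall>t. a x (Suc t) = gg (ext (uAx x) l (a x) t) (ext (uBx x) r (a x) t)"
proof
  fix t
  have A: "X x t p = (ext (uAx x) l (a x) t \<noteq> SA (l - 1))"
  proof (cases "l \<le> Suc t")
    case True
    hence "l - 1 \<le> t" "t - (l - 1) = Suc t - l" using l0 by auto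
    thus ?thesis using XA[OF x, of "l - 1" t] l0 True unfolding p_def ext_def by simp
  next
    case False
    hence "\<not> l - 1 \<le> t" by auto
    thus ?thesis using XA[OF x, of "l - 1" t] l0 False unfolding p_def ext_def by auto
  qed
  have B: "X x t q = (ext (uBx x) r (a x) t \<noteq> SB (r - 1))"
  proof (cases "r \<le> Suc t")
    case True
    hence "r - 1 \<le> t" "t - (r - 1) = Suc t - r" using r0 by auto
    thus ?thesis using XB[OF x, of "r - 1" t] r0 True unfolding q_vB ext_def by simp
  next
    case False
    hence "\<not> r - 1 \<le> t" by auto
    thus ?thesis using XB[OF x, of "r - 1" t] r0 False unfolding q_vB ext_def by auto
  qed
  have "a x (Suc t) = h (X x t p) (X x t q)"
    unfolding a_def X_Suc using f_0[OF X_conf[OF x]] .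
  also have "\<dots> = gg (ext (uAx x) l (a x) t) (ext (uBx x) r (a x) t)"
    unfolding A B gg_def by simp
  finally show "a x (Suc t) = gg (ext (uAx x) l (a x) t) (ext (uBx x) r (a x) t)" .
qed

lemma Sys_a: "x \<in> conf V \<Longrightarrow> Sys l r gg (a x)"
  unfolding Sys_def using a_rec by blast

lemma realize:
  assumes "Sys l r gg b"
  shows "\<exists>x\<in>conf V. a x = b"
proof -
  obtain uA uB where rb: "\<forall>t. b (Suc t) = gg (ext uA l b t) (ext uB r b t)"
    using assms unfolding Sys_def by blast
  define x where "x i = (if i = 0 then b 0 else if i < l then (uA (l - 1 - i) \<noteq> SA i)
      else if i < l + r - 1 then (uB (r - 1 - (i + 1 - l)) \<noteq> SB (i + 1 - l)) else False)" for i
  have xc: "x \<in> conf V" using l0 r0 unfolding conf_def x_def by auto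
  have eA: "\<forall>t. Suc t < l \<longrightarrow> uA t = uAx x t"
  proof (intro allI impI)
    fix t assume t: "Suc t < l"
    hence "l - 1 - t \<noteq> 0" "l - 1 - t < l" "l - 1 - (l - 1 - t) = t" by auto
    thus "uA t = uAx x t" unfolding x_def by auto
  qed
  have eB: "\<forall>t. Suc t < r \<longrightarrow> uB t = uBx x t"
  proof (intro allI impI)
    fix t assume t: "Suc t < r"
    let ?j = "r - 1 - t"
    have j: "0 < ?j" "?j < r" using t by auto
    hence "vB l ?j = l + ?j - 1" unfolding vB_def by simp
    moreover have "l + ?j - 1 \<noteq> 0" "\<not> l + ?j - 1 < l" "l + ?j - 1 < l + r - 1"
      "l + ?j - 1 + 1 - l = ?j" "r - 1 - ?j = t" using j l0 t by auto
    ultimately show "uB t = uBx x t" unfolding x_def by auto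
  qed
  have "b = a x"
    by (rule sys_unique[OF l0 r0 rb a_rec[OF xc] eA eB]) (simp add: a_def X_def x_def)
  thus ?thesis using xc by blast
qed

lemma win_iff:
  assumes x: "x \<in> conf V" and y: "y \<in> conf V" and k: "max l r - 1 \<le> k"
  shows "X x k = X y k \<longleftrightarrow> win (max l r) k (a x) (a y)"
proof
  assume e: "X x k = X y k"
  show "win (max l r) k (a x) (a y)" unfolding win_def
  proof (intro allI impI)
    fix j assume j: "j < max l r"
    hence jk: "j \<le> k" using k by simp
    show "a x (k - j) = a y (k - j)"
    proof (cases "j < l")
      case True
      thus ?thesis using XA[OF x True, of k] XA[OF y True, of k] e jk by auto
    next
      case False
      hence "j < r" using j by simp
      thus ?thesis using XB[OF x \<open>j < r\<close>, of k] XB[OF y \<open>j < r\<close>, of k] e jk by auto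
    qed
  qed
next
  assume w: "win (max l r) k (a x) (a y)"
  show "X x k = X y k"
  proof
    fix i
    show "X x k i = X y k i"
    proof (cases "i < l")
      case True
      hence "i < max l r" "i \<le> k" using k by auto
      thus ?thesis using XA[OF x True, of k] XA[OF y True, of k] w unfolding win_def by simp
    next
      case False
      show ?thesis
      proof (cases "i < l + r - 1")
        case True
        let ?j = "i + 1 - l"
        have j: "?j < r" "0 < ?j" "vB l ?j = i" using True False l0 unfolding vB_def by auto
        hence "?j < max l r" "?j \<le> k" using k by auto
        thus ?thesis using XB[OF x j(1), of k] XB[OF y j(1), of k] w j(3) unfolding win_def by simp
      next
        case False
        thus ?thesis using X_conf[OF x, of k] X_conf[OF y, of k] unfolding conf_def by auto
      qed
    qed
  qed
qed

lemma const_iff: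
  assumes k: "max l r - 1 \<le> k"
  shows "const_iter V f k \<longleftrightarrow> AllWin l r gg k"
proof
  assume "const_iter V f k"
  then obtain c where c: "\<forall>x\<in>conf V. (f ^^ k) x = c" unfolding const_iter_def by blast
  show "AllWin l r gg k" unfolding AllWin_def
  proof (intro allI impI)
    fix b1 b2 assume "Sys l r gg b1" "Sys l r gg b2"
    then obtain x y where xy: "x \<in> conf V" "a x = b1" "y \<in> conf V" "a y = b2"
      using realize by metis
    have "X x k = X y k" using c xy unfolding X_def by simp
    thus "win (max l r) k b1 b2" using win_iff[OF xy(1,3) k] xy by simp
  qed
next
  assume aw: "AllWin l r gg k"
  have "\<forall>x\<in>conf V. (f ^^ k) x = X zero k"
  proof
    fix x assume x: "x \<in> conf V"
    have "win (max l r) k (a x) (a zero)"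
      using aw Sys_a[OF x] Sys_a[OF zero_conf] unfolding AllWin_def by blast
    thus "(f ^^ k) x = X zero k" using win_iff[OF x zero_conf k] unfolding X_def by simp
  qed
  thus "const_iter V f k" unfolding const_iter_def by blast
qed

lemma class_result:
  assumes "nilpotent V f"
  shows "min l r dvd max l r \<and> nil_class V f = 2 * max l r - 1"
proof -
  obtain k where k: "const_iter V f k" using assms unfolding nilpotent_def by blast
  have "const_iter V f (k + max l r)" by (rule const_iter_mono[OF bf k]) simp
  hence "AllWin l r gg (k + max l r)" using const_iff by simp
  from core[OF l0 r0 nt gg_ess _ this]
  have c: "min l r dvd max l r" "AllWin l r gg (2 * max l r - 1)" "\<not> AllWin l r gg (2 * max l r - 2)"
    by auto
  have c1: "const_iter V f (2 * max l r - 1)" using const_iff c(2) by simp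
  have c2: "\<not> const_iter V f (2 * max l r - 2)" using const_iff c(3) l0 by simp
  have "nil_class V f = 2 * max l r - 1" unfolding nil_class_def
  proof (rule Least_equality)
    show "const_iter V f (2 * max l r - 1)" by (rule c1)
  next
    fix m assume m: "const_iter V f m"
    show "2 * max l r - 1 \<le> m"
    proof (rule ccontr)
      assume "\<not> 2 * max l r - 1 \<le> m"
      hence "m \<le> 2 * max l r - 2" by simp
      from const_iter_mono[OF bf m this] c2 show False by simp
    qed
  qed
  with c show ?thesis by simp
qed

end

definition G0 :: "nat \<Rightarrow> nat \<Rightarrow> bool \<Rightarrow> bool \<Rightarrow> bool" where
  "G0 l r = (if l \<le> r then (\<lambda>u v. u \<and> \<not> v) else (\<lambda>u v. v \<and> \<not> u))"

definition f0 :: "nat \<Rightarrow> nat \<Rightarrow> (nat \<Rightarrow> bool) \<Rightarrow> (nat \<Rightarrow> bool)" where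
  "f0 l r x i = (if i = 0 then G0 l r (x (l - 1)) (x (qe l r)) else if i < l + r - 1 then x (pd l i) else False)"

lemma G0_ess: "ess (G0 l r)"
  unfolding ess_def G0_def by auto

lemma f0_admits:
  assumes l0: "0 < l" and r0: "0 < r" and nt: "\<not> (l = 1 \<and> r = 1)"
  shows "admits {..<l + r - 1} (double_cycle l r) (f0 l r)"
proof -
  let ?V = "{..<l + r - 1}"
  have pq: "l - 1 < l + r - 1" "qe l r < l + r - 1" "l - 1 \<noteq> qe l r"
    using l0 r0 nt unfolding qe_def by auto
  have bf: "boolfun ?V (f0 l r)" using l0 r0 unfolding boolfun_def conf_def f0_def by auto
  have "interaction_graph ?V (f0 l r) = double_cycle l r"
  proof (intro set_eqI, clarify)
    fix j i
    show "(j, i) \<in> interaction_graph ?V (f0 l r) \<longleftrightarrow> (j, i) \<in> double_cycle l r"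
      unfolding dc_char[OF l0 r0]
    proof
      assume "(j, i) \<in> interaction_graph ?V (f0 l r)"
      then obtain b where b: "j \<in> ?V" "i \<in> ?V" "f0 l r b i \<noteq> f0 l r (b(j := \<not> b j)) i"
        unfolding interaction_graph_def by auto
      show "(i = 0 \<and> (j = l - 1 \<or> j = qe l r)) \<or> (0 < i \<and> i < l + r - 1 \<and> j = pd l i)"
      proof (cases "i = 0")
        case True
        show ?thesis
        proof (rule ccontr)
          assume "\<not> ?thesis"
          hence "j \<noteq> l - 1" "j \<noteq> qe l r" using True by auto
          hence "f0 l r b i = f0 l r (b(j := \<not> b j)) i" using True unfolding f0_def by simp
          with b(3) show False by simp
        qed
      next
        case False
        show ?thesis
        proof (rule ccontr)
          assume "\<not> ?thesis"
          hence "j \<noteq> pd l i" using False b(2) by auto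
          hence "f0 l r b i = f0 l r (b(j := \<not> b j)) i" using False unfolding f0_def by simp
          with b(3) show False by simp
        qed
      qed
    next
      assume h: "(i = 0 \<and> (j = l - 1 \<or> j = qe l r)) \<or> (0 < i \<and> i < l + r - 1 \<and> j = pd l i)"
      have zc: "\<And>k b. k < l + r - 1 \<Longrightarrow> zero(k := b) \<in> conf ?V" unfolding conf_def zero_def by auto
      have zc2: "\<And>k b k' b'. k < l + r - 1 \<Longrightarrow> k' < l + r - 1 \<Longrightarrow> zero(k := b, k' := b') \<in> conf ?V"
        unfolding conf_def zero_def by auto
      show "(j, i) \<in> interaction_graph ?V (f0 l r)"
      proof (cases "i = 0")
        case True
        hence j: "j = l - 1 \<or> j = qe l r" using h by simp
        thus ?thesis
        proof
          assume jj: "j = l - 1"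
          obtain v where v: "G0 l r True v \<noteq> G0 l r False v" using G0_ess unfolding ess_def by blast
          let ?b = "zero(qe l r := v)"
          have "f0 l r ?b 0 \<noteq> f0 l r (?b(j := \<not> ?b j)) 0"
            using v pq jj unfolding f0_def zero_def by auto
          moreover have "?b \<in> conf ?V" using zc[of "qe l r" v] pq by simp
          ultimately have w: "\<exists>a\<in>conf ?V. f0 l r a 0 \<noteq> f0 l r (a(j := \<not> a j)) 0" by blast
          have "0 < l + r - 1" using l0 r0 by simp
          thus ?thesis unfolding interaction_graph_def using True jj pq w by simp
        next
          assume jj: "j = qe l r"
          obtain u where u: "G0 l r u True \<noteq> G0 l r u False" using G0_ess unfolding ess_def by blast
          let ?b = "zero(l - 1 := u)"
          have "f0 l r ?b 0 \<noteq> f0 l r (?b(j := \<not> ?b j)) 0"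
            using u pq jj unfolding f0_def zero_def by auto
          moreover have "?b \<in> conf ?V" using zc[of "l - 1" u] pq by simp
          ultimately have w: "\<exists>a\<in>conf ?V. f0 l r a 0 \<noteq> f0 l r (a(j := \<not> a j)) 0" by blast
          have "0 < l + r - 1" using l0 r0 by simp
          thus ?thesis unfolding interaction_graph_def using True jj pq w by simp
        qed
      next
        case False
        hence i: "0 < i" "i < l + r - 1" "j = pd l i" using h by auto
        have jv: "j < l + r - 1" "j \<noteq> i" using i unfolding pd_def by auto
        have "f0 l r zero i \<noteq> f0 l r (zero(j := \<not> zero j)) i"
          using i jv unfolding f0_def zero_def by auto
        moreover have "zero \<in> conf ?V" unfolding zero_def conf_def by simp
        ultimately have w: "\<exists>a\<in>conf ?V. f0 l r a i \<noteq> f0 l r (a(j := \<not> a j)) i" by blast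
        thus ?thesis unfolding interaction_graph_def using i jv by simp
      qed
    qed
  qed
  thus ?thesis using bf unfolding admits_def by simp
qed

lemma cum_False: "(\<forall>j. s j = False) \<Longrightarrow> cum s j = False"
  by (induction j) auto

lemma f0_gg:
  assumes "0 < l" "0 < r" "\<not> (l = 1 \<and> r = 1)"
  shows "DC.gg l r (f0 l r) = G0 l r"
proof -
  interpret D: DC l r "f0 l r" using assms f0_admits by unfold_locales auto
  have sg: "\<forall>i. D.sg i = False" unfolding D.sg_def f0_def zero_def G0_def by auto
  have SA: "D.SA = (\<lambda>_. False)" and SB: "D.SB = (\<lambda>_. False)" unfolding D.SA_def D.SB_def
    using cum_False sg by auto
  have h: "D.h u v = G0 l r u v" for u v
    using D.pq(3) unfolding D.h_def f0_def D.p_def D.q_def by simp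
  show ?thesis by (rule ext)+ (simp add: D.gg_def h SA SB)
qed


theorem theorem3:
  fixes l r :: nat
  assumes "l \<ge> 1" and "r \<ge> 1" and "\<not> (l = 1 \<and> r = 1)"
  shows "((\<exists>f. admits {..<l + r - 1} (double_cycle l r) f \<and> nilpotent {..<l + r - 1} f)
            \<longleftrightarrow> min l r dvd max l r)
       \<and> (\<forall>f. admits {..<l + r - 1} (double_cycle l r) f \<and> nilpotent {..<l + r - 1} f
            \<longrightarrow> nil_class {..<l + r - 1} f = 2 * max l r - 1)"
proof -
  have l0: "0 < l" and r0: "0 < r" using assms by auto
  have A: "min l r dvd max l r \<and> nil_class {..<l + r - 1} f = 2 * max l r - 1"
    if "admits {..<l + r - 1} (double_cycle l r) f" "nilpotent {..<l + r - 1} f" for f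
  proof -
    interpret D: DC l r f using l0 r0 assms(3) that(1) by unfold_locales
    show ?thesis using D.class_result[OF that(2)] .
  qed
  have B: "\<exists>f. admits {..<l + r - 1} (double_cycle l r) f \<and> nilpotent {..<l + r - 1} f"
    if dv: "min l r dvd max l r"
  proof -
    have adm: "admits {..<l + r - 1} (double_cycle l r) (f0 l r)" using f0_admits l0 r0 assms(3) by blast
    interpret D: DC l r "f0 l r" using l0 r0 assms(3) adm by unfold_locales
    have "AllWin l r (G0 l r) (2 * max l r - 1)"
      using core_exists[OF l0 r0 dv] unfolding G0_def .
    hence "AllWin l r D.gg (2 * max l r - 1)" using f0_gg[OF l0 r0 assms(3)] by simp
    hence "const_iter {..<l + r - 1} (f0 l r) (2 * max l r - 1)" using D.const_iff by simp
    hence "nilpotent {..<l + r - 1} (f0 l r)" unfolding nilpotent_def by blast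
    thus ?thesis using adm by blast
  qed
  show ?thesis using A B by blast
qed

end
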